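(* For every integer $n\ge 2$ and every set $V$ of $n$ positive integers, there exists $v\in V$ such that $\kappa(V\setminus\{v\})\ge\frac1n$.
   Context: For $x\in\mathbb{R}$, $\|x\|=\min\{x-\lfloor x\rfloor,\lceil x\rceil-x\}$ denotes the distance from $x$ to the nearest integer. For a finite nonempty set $V$ of positive integers, $\kappa(V)=\sup_{t\in(0,1)}\min_{v\in V}\|tv\|$. *)

theory Defs
  imports Complex_Main
begin

definition dist_nearest_int :: "real \<Rightarrow> real" where
  "dist_nearest_int x = min (x - of_int \<lfloor>x\<rfloor>) (of_int \<lceil>x\<rceil> - x)"

definition kappa :: "nat set \<Rightarrow> real" where
  "kappa V = (SUP t\<in>{0<..<1::real}. Min ((\<lambda>v. dist_nearest_int (t * real v)) ` V))"

end

theory Submission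
  imports Defs
begin

lemma count_mod:
  fixes N k :: nat and S :: "nat set"
  assumes "N > 0"
  shows "card {j. j < k*N \<and> j mod N \<in> S} = k * card (S \<inter> {..<N})"
proof -
  let ?f = "\<lambda>(q,r). q*N + r"
  have inj: "inj_on ?f ({..<k} \<times> (S \<inter> {..<N}))"
  proof (rule inj_onI, clarsimp)
    fix q r q' r' assume "r < N" "r' < N" "q*N + r = q'*N + r'"
    then have "(q*N+r) div N = (q'*N+r') div N" "(q*N+r) mod N = (q'*N+r') mod N" by simp_all
    then show "q = q' \<and> r = r'" using \<open>r < N\<close> \<open>r' < N\<close> assms by simp
  qed
  have img: "?f ` ({..<k} \<times> (S \<inter> {..<N})) = {j. j < k*N \<and> j mod N \<in> S}"
  proof (rule set_eqI, rule iffI)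
    fix j assume "j \<in> ?f ` ({..<k} \<times> (S \<inter> {..<N}))"
    then obtain q r where "q < k" "r \<in> S" "r < N" "j = q*N + r" by auto
    moreover have "q*N + r < k*N"
    proof -
      have "q*N + r < q*N + N" using \<open>r<N\<close> by simp
      also have "\<dots> = Suc q * N" by simp
      also have "\<dots> \<le> k * N" using \<open>q<k\<close> by (intro mult_right_mono) auto
      finally show ?thesis .
    qed
    ultimately show "j \<in> {j. j < k*N \<and> j mod N \<in> S}" by simp
  next
    fix j assume "j \<in> {j. j < k*N \<and> j mod N \<in> S}"
    then have j: "j < k*N" "j mod N \<in> S" by auto
    have "j div N < k" using j(1) assms by (simp add: div_less_iff_less_mult)
    moreover have "j = ?f (j div N, j mod N)" by simp
    ultimately show "j \<in> ?f ` ({..<k} \<times> (S \<inter> {..<N}))"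
      using j(2) assms by (intro image_eqI) auto
  qed
  have "card {j. j < k*N \<and> j mod N \<in> S} = card ({..<k} \<times> (S \<inter> {..<N}))"
    using card_image[OF inj] img by simp
  also have "\<dots> = k * card (S \<inter> {..<N})" by (simp add: card_cartesian_product)
  finally show ?thesis .
qed

lemma count_bad:
  fixes n Q :: nat
  assumes "n \<ge> 2" "Q > 0"
  shows "card ({r. r < Q \<or> n*Q - Q < r} \<inter> {..<n*Q}) = 2*Q - 1"
proof -
  have "2*Q \<le> n*Q" using assms by (intro mult_right_mono) auto
  then have QN: "Q \<le> n*Q - Q" by linarith
  have eq: "{r. r < Q \<or> n*Q - Q < r} \<inter> {..<n*Q} = {..<Q} \<union> {n*Q - Q<..<n*Q}"
    using QN by auto
  have "card ({..<Q} \<union> {n*Q - Q<..<n*Q}) = card {..<Q} + card {n*Q - Q<..<n*Q}"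
    using QN by (intro card_Un_disjoint) auto
  also have "\<dots> = Q + (Q - 1)" using QN assms by simp
  finally show ?thesis using eq assms by simp
qed

lemma dni_ge:
  assumes "\<And>k::int. \<bar>x - of_int k\<bar> \<ge> d"
  shows "dist_nearest_int x \<ge> d"
proof -
  have "x - of_int \<lfloor>x\<rfloor> \<ge> d" using assms[of "\<lfloor>x\<rfloor>"] by simp
  moreover have "of_int \<lceil>x\<rceil> - x \<ge> d" using assms[of "\<lceil>x\<rceil>"] by simp
  ultimately show ?thesis unfolding dist_nearest_int_def by simp
qed

lemma dni_le1: "dist_nearest_int x \<le> 1"
proof -
  have "x - of_int \<lfloor>x\<rfloor> \<le> 1" using floor_correct[of x] by linarith
  then show ?thesis unfolding dist_nearest_int_def by (simp add: min_le_iff_disj)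
qed

lemma int_far:
  fixes j N Q :: nat and k :: int
  assumes "Q \<le> j mod N" "j mod N \<le> N - Q" "N > 0"
  shows "\<bar>int j - k * int N\<bar> \<ge> int Q"
proof -
  define a where "a = int (j div N)"
  define r where "r = int (j mod N)"
  have j: "int j = a * int N + r" unfolding a_def r_def
    by (simp flip: of_nat_mult of_nat_add)
  have r: "int Q \<le> r" "r \<le> int N - int Q" using assms unfolding r_def by auto
  have e: "int j - k * int N = (a - k) * int N + r" using j by (simp add: algebra_simps)
  show ?thesis
  proof (cases "a - k \<ge> 0")
    case True
    then have "(a - k) * int N \<ge> 0" by simp
    then show ?thesis using e r by linarith
  next
    case False
    then have "(a - k) * int N \<le> (-1) * int N" by (intro mult_right_mono) auto
    then show ?thesis using e r by linarith
  qed
qed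

theorem mainTheorem7:
  fixes n :: nat and V :: "nat set"
  assumes "n \<ge> 2" and "finite V" and "card V = n" and "\<forall>v\<in>V. v > 0"
  shows "\<exists>v\<in>V. kappa (V - {v}) \<ge> 1 / real n"
proof -
  note n2 = assms(1) and finV = assms(2) and cardV = assms(3) and pos = assms(4)
  have Vne: "V \<noteq> {}" using n2 cardV by auto
  define P where "P = (\<Prod>v\<in>V. v)"
  have Ppos: "P > 0" unfolding P_def using pos finV by (simp add: prod_pos)
  define Q where "Q v = P div v" for v
  define M where "M = n * P"
  define bad where "bad v j \<longleftrightarrow> j mod (n * Q v) \<in> {r. r < Q v \<or> n * Q v - Q v < r}" for v j
  have vQ: "v * Q v = P" if "v \<in> V" for v
    unfolding Q_def using dvd_prodI[OF finV that, of "\<lambda>x. x"] unfolding P_def by simp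
  have Qpos: "Q v > 0" if "v \<in> V" for v
    using vQ[OF that] Ppos by (cases "Q v") auto
  have MvN: "M = v * (n * Q v)" if "v \<in> V" for v
    using vQ[OF that] unfolding M_def by (simp add: algebra_simps)
  have cnt: "card {j. j < M \<and> bad v j} = v * (2 * Q v - 1)" if "v \<in> V" for v
  proof -
    have N0: "n * Q v > 0" using Qpos[OF that] n2 by simp
    have "card {j. j < M \<and> bad v j} = card {j. j < v * (n * Q v) \<and> j mod (n * Q v) \<in> {r. r < Q v \<or> n * Q v - Q v < r}}"
      unfolding bad_def MvN[OF that] by simp
    also have "\<dots> = v * card ({r. r < Q v \<or> n * Q v - Q v < r} \<inter> {..<n * Q v})"
      by (rule count_mod[OF N0])
    also have "\<dots> = v * (2 * Q v - 1)" using count_bad[OF n2 Qpos[OF that]] by simp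
    finally show ?thesis .
  qed
  have cntlt: "card {j. j < M \<and> bad v j} < 2 * P" if "v \<in> V" for v
  proof -
    have "v * (2 * Q v - 1) < v * (2 * Q v)" using pos that Qpos[OF that] by simp
    also have "\<dots> = 2 * P" using vQ[OF that] by (simp add: algebra_simps)
    finally show ?thesis using cnt[OF that] by simp
  qed
  have swap: "(\<Sum>j<M. card {v\<in>V. bad v j}) = (\<Sum>v\<in>V. card {j. j < M \<and> bad v j})"
  proof -
    have "(\<Sum>j<M. card {v\<in>V. bad v j}) = (\<Sum>j<M. \<Sum>v\<in>V. if bad v j then 1 else 0)"
      using finV by (simp add: sum.inter_filter[symmetric])
    also have "\<dots> = (\<Sum>v\<in>V. \<Sum>j<M. if bad v j then 1 else 0)" by (rule sum.swap)
    also have "\<dots> = (\<Sum>v\<in>V. card {j\<in>{..<M}. bad v j})"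
      by (simp add: sum.inter_filter[symmetric])
    also have "\<dots> = (\<Sum>v\<in>V. card {j. j < M \<and> bad v j})"
      by (intro sum.cong) (auto intro: arg_cong[where f=card])
    finally show ?thesis .
  qed
  have "(\<Sum>v\<in>V. card {j. j < M \<and> bad v j}) < (\<Sum>v\<in>V. 2 * P)"
    using finV Vne cntlt by (intro sum_strict_mono) auto
  also have "\<dots> = M * 2" using cardV unfolding M_def by simp
  finally have sumlt: "(\<Sum>j<M. card {v\<in>V. bad v j}) < M * 2" using swap by simp
  obtain j where jM: "j < M" and j1: "card {v\<in>V. bad v j} \<le> 1"
  proof (rule ccontr)
    assume "\<not> thesis"
    then have "\<forall>j<M. 2 \<le> card {v\<in>V. bad v j}" using that by force
    then have "(\<Sum>j<M. (2::nat)) \<le> (\<Sum>j<M. card {v\<in>V. bad v j})"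
      by (intro sum_mono) auto
    then show False using sumlt by simp
  qed
  have j0: "j > 0"
  proof (rule ccontr)
    assume "\<not> j > 0"
    then have "j = 0" by simp
    then have "{v\<in>V. bad v j} = V" using Qpos unfolding bad_def by auto
    then show False using j1 cardV n2 by simp
  qed
  obtain v0 where v0: "v0 \<in> V" and good: "\<And>w. w \<in> V - {v0} \<Longrightarrow> \<not> bad w j"
  proof (cases "{v\<in>V. bad v j} = {}")
    case True
    then obtain v0 where "v0 \<in> V" using Vne by auto
    then show ?thesis using that True by auto
  next
    case False
    then obtain b where b: "b \<in> V" "bad b j" by auto
    have "\<forall>a\<in>{v\<in>V. bad v j}. \<forall>c\<in>{v\<in>V. bad v j}. a = c"
      using j1 finV by (subst card_le_Suc0_iff_eq[symmetric]) auto
    then show ?thesis using that[of b] b by auto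
  qed
  define t where "t = real j / real M"
  have Mpos: "M > 0" unfolding M_def using Ppos n2 by simp
  have t01: "t \<in> {0<..<1}" unfolding t_def using jM j0 Mpos by auto
  have far: "dist_nearest_int (t * real w) \<ge> 1 / real n" if w: "w \<in> V - {v0}" for w
  proof -
    have wV: "w \<in> V" using w by simp
    define N where "N = n * Q w"
    have N0: "N > 0" unfolding N_def using Qpos[OF wV] n2 by simp
    have tw: "t * real w = real j / real N"
      proof -
      have w0: "w > 0" using pos wV by simp
      show ?thesis unfolding t_def N_def MvN[OF wV] using w0 by (simp add: field_simps)
    qed
    have nb: "Q w \<le> j mod N" "j mod N \<le> N - Q w"
      using good[OF w] unfolding bad_def N_def by auto
    show ?thesis unfolding tw
    proof (rule dni_ge)
      fix k :: int
      have "int (Q w) \<le> \<bar>int j - k * int N\<bar>" by (rule int_far[OF nb N0])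
      then have "real_of_int (int (Q w)) \<le> real_of_int \<bar>int j - k * int N\<bar>"
        by (simp only: of_int_le_iff)
      then have h: "real (Q w) \<le> \<bar>real j - real_of_int k * real N\<bar>" by simp
      have "\<bar>real j / real N - real_of_int k\<bar> = \<bar>real j - real_of_int k * real N\<bar> / real N"
        using N0 by (simp add: field_simps abs_divide[symmetric])
      moreover have "real (Q w) / real N = 1 / real n"
        unfolding N_def using Qpos[OF wV] by simp
      ultimately show "1 / real n \<le> \<bar>real j / real N - real_of_int k\<bar>"
        using divide_right_mono[OF h, of "real N"] by simp
    qed
  qed
  have fin2: "finite (V - {v0})" using finV by simp
  have "card (V - {v0}) = n - 1" using card_Diff_singleton[OF v0] cardV by simp
  then have ne2: "V - {v0} \<noteq> {}" using n2 by (metis card.empty diff_is_0_eq not_numeral_le_zero le_trans diff_le_self One_nat_def Suc_1 Suc_le_eq zero_less_diff)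
  have "1 / real n \<le> Min ((\<lambda>v. dist_nearest_int (t * real v)) ` (V - {v0}))"
    using fin2 ne2 far by (simp add: Min_ge_iff)
  also have "\<dots> \<le> kappa (V - {v0})"
    unfolding kappa_def
  proof (rule cSUP_upper[OF t01])
    obtain a where a: "a \<in> V - {v0}" using ne2 by auto
    show "bdd_above ((\<lambda>t. Min ((\<lambda>v. dist_nearest_int (t * real v)) ` (V - {v0}))) ` {0<..<1})"
    proof (rule bdd_aboveI2)
      fix s :: real
      have "Min ((\<lambda>v. dist_nearest_int (s * real v)) ` (V - {v0})) \<le> dist_nearest_int (s * real a)"
        using fin2 a by (intro Min_le) auto
      also have "\<dots> \<le> 1" by (rule dni_le1)
      finally show "Min ((\<lambda>v. dist_nearest_int (s * real v)) ` (V - {v0})) \<le> 1" .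
    qed
  qed
  finally show ?thesis using v0 by blast
qed

end
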